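(* Let $g:[0,1]\to\mathbb{R}$ be strictly monotone in a neighborhood of $x_0\in[0,1]$, let $d\in(0,1)$, $a\ne0$, and $x_m=x_0+ad^m$, with $x_m\in[0,1]$ for all large $m$. Suppose that $\frac{g(x_m)-g(x_0)}{x_m-x_0}\to L$ as $m\to\infty$, where $L\in\{0,+\infty,-\infty\}$. If $a<0$, then the left derivative of $g$ at $x_0$ exists and equals $L$; if $a>0$, then the right derivative of $g$ at $x_0$ exists and equals $L$. (One-sided monotonicity on the relevant side of $x_0$ suffices for the corresponding one-sided conclusion.) *)

theory Defs
  imports "HOL-Analysis.Analysis"
begin

end

theory Submission
  imports Defs
begin

lemma bracket:
  fixes g :: "real \<Rightarrow> real"
  assumes a: "a > 0" and d: "0 < d" "d < 1"
    and mono: "(\<forall>x\<in>{x0..x0+e}. \<forall>y\<in>{x0..x0+e}. x \<le> y \<longrightarrow> g x \<le> g y)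
             \<or> (\<forall>x\<in>{x0..x0+e}. \<forall>y\<in>{x0..x0+e}. x \<le> y \<longrightarrow> g y \<le> g x)"
    and N: "a * d ^ N \<le> e" and x: "x0 < x" "x < x0 + a * d ^ N"
  shows "\<exists>m\<ge>N. (d * ((g (x0 + a*d^(m+1)) - g x0) / (a*d^(m+1))) \<le> (g x - g x0)/(x - x0)
                 \<and> (g x - g x0)/(x - x0) \<le> ((g (x0 + a*d^m) - g x0) / (a*d^m)) / d)
             \<or> (((g (x0 + a*d^m) - g x0) / (a*d^m)) / d \<le> (g x - g x0)/(x - x0)
                 \<and> (g x - g x0)/(x - x0) \<le> d * ((g (x0 + a*d^(m+1)) - g x0) / (a*d^(m+1))))"
proof -
  define t where "t = (x - x0) / a"
  have t0: "0 < t" using a x by (simp add: t_def)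
  have tN: "t < d ^ N" using a x by (simp add: t_def field_simps)
  have ex: "\<exists>n. d ^ n < t" using real_arch_pow_inv[OF t0 d(2)] .
  define n where "n = (LEAST n. d ^ n < t)"
  have n1: "d ^ n < t" unfolding n_def using LeastI_ex[OF ex] .
  have n2: "\<And>k. k < n \<Longrightarrow> t \<le> d ^ k" unfolding n_def using not_less_Least by force
  have "N < n"
  proof (rule ccontr)
    assume "\<not> N < n"
    then have "d ^ N \<le> d ^ n" using d by (intro power_decreasing) auto
    with n1 tN show False by simp
  qed
  define m where "m = n - 1"
  have mN: "m \<ge> N" and nm: "n = m + 1" using \<open>N < n\<close> by (auto simp: m_def)
  have tm: "t \<le> d ^ m" using n2[of m] nm by simp
  have dm: "d ^ m \<le> d ^ N" using d mN by (intro power_decreasing) auto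
  have dpos: "0 < d ^ m" "0 < d^(m+1)" using d by auto
  define u where "u = x0 + a*d^(m+1)"
  define v where "v = x0 + a*d^m"
  have xu: "u < x" using n1 nm a unfolding u_def t_def by (simp add: field_simps)
  have xv: "x \<le> v" using tm a unfolding v_def t_def by (simp add: field_simps)
  have u0: "x0 < u" using a dpos unfolding u_def by simp
  have ve: "v \<le> x0 + e" using dm a N unfolding v_def
    by (smt (verit) mult_left_mono)
  have ins: "x0 \<in> {x0..x0+e}" "u \<in> {x0..x0+e}" "x \<in> {x0..x0+e}" "v \<in> {x0..x0+e}"
    using u0 xu xv ve by auto
  have ud: "u - x0 = a*d^(m+1)" "v - x0 = a*d^m" unfolding u_def v_def by simp_all
  have pos: "0 < a*d^(m+1)" "0 < a*d^m" "x - x0 > 0" using a dpos x by auto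
  have k1: "(g v - g x0) / (a*d^m) / d = (g v - g x0) / (a*d^(m+1))" using d by (simp add: field_simps)
  have k2: "d * ((g u - g x0) / (a*d^(m+1))) = (g u - g x0) / (a*d^m)" using d a by (simp add: field_simps)
  from mono show ?thesis
  proof
    assume mo: "\<forall>x\<in>{x0..x0+e}. \<forall>y\<in>{x0..x0+e}. x \<le> y \<longrightarrow> g x \<le> g y"
    have o: "g x0 \<le> g u" "g u \<le> g x" "g x \<le> g v" using mo ins xu xv u0 by auto
    have "(g u - g x0) / (a*d^m) \<le> (g u - g x0) / (x - x0)"
      using o pos xv ud by (intro divide_left_mono) auto
    also have "\<dots> \<le> (g x - g x0) / (x - x0)" using o pos by (intro divide_right_mono) auto
    finally have A: "(g u - g x0) / (a*d^m) \<le> (g x - g x0) / (x - x0)" .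
    have "(g x - g x0) / (x - x0) \<le> (g v - g x0) / (x - x0)" using o pos by (intro divide_right_mono) auto
    also have "\<dots> \<le> (g v - g x0) / (a*d^(m+1))"
      using o pos xu ud by (intro divide_left_mono) auto
    finally have B: "(g x - g x0) / (x - x0) \<le> (g v - g x0) / (a*d^(m+1))" .
    have "d * ((g u - g x0) / (a*d^(m+1))) \<le> (g x - g x0)/(x - x0) \<and> (g x - g x0)/(x - x0) \<le> (g v - g x0) / (a*d^m) / d"
      unfolding k1 k2 using A B by (intro conjI)
    then show ?thesis using mN unfolding u_def v_def by blast
  next
    assume mo: "\<forall>x\<in>{x0..x0+e}. \<forall>y\<in>{x0..x0+e}. x \<le> y \<longrightarrow> g y \<le> g x"
    have o: "g u \<le> g x0" "g x \<le> g u" "g v \<le> g x" using mo ins xu xv u0 by auto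
    have "(g x - g x0) / (x - x0) \<le> (g u - g x0) / (x - x0)" using o pos by (intro divide_right_mono) auto
    also have "\<dots> \<le> (g u - g x0) / (a*d^m)"
      using o pos xv ud by (intro divide_left_mono_neg) auto
    finally have A: "(g x - g x0) / (x - x0) \<le> (g u - g x0) / (a*d^m)" .
    have "(g v - g x0) / (a*d^(m+1)) \<le> (g v - g x0) / (x - x0)"
      using o pos xu ud by (intro divide_left_mono_neg) auto
    also have "\<dots> \<le> (g x - g x0) / (x - x0)" using o pos by (intro divide_right_mono) auto
    finally have B: "(g v - g x0) / (a*d^(m+1)) \<le> (g x - g x0) / (x - x0)" .
    have "(g v - g x0) / (a*d^m) / d \<le> (g x - g x0)/(x - x0) \<and> (g x - g x0)/(x - x0) \<le> d * ((g u - g x0) / (a*d^(m+1)))"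
      unfolding k1 k2 using A B by (intro conjI)
    then show ?thesis using mN unfolding u_def v_def by blast
  qed
qed


lemma core_right:
  fixes g :: "real \<Rightarrow> real" and L :: ereal
  assumes a: "a > 0" and d: "0 < d" "d < 1" and e: "e > 0"
    and mono: "(\<forall>x\<in>{x0..x0+e}. \<forall>y\<in>{x0..x0+e}. x \<le> y \<longrightarrow> g x \<le> g y)
             \<or> (\<forall>x\<in>{x0..x0+e}. \<forall>y\<in>{x0..x0+e}. x \<le> y \<longrightarrow> g y \<le> g x)"
    and lim: "((\<lambda>m. ereal ((g (x0 + a*d^m) - g x0) / (a*d^m))) \<longlongrightarrow> L) sequentially"
    and L: "L \<in> {0, \<infinity>, -\<infinity>}"
  shows "((\<lambda>x. ereal ((g x - g x0) / (x - x0))) \<longlongrightarrow> L) (at_right x0)"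
proof -
  define Q where "Q m = (g (x0 + a*d^m) - g x0) / (a*d^m)" for m
  define q where "q x = (g x - g x0) / (x - x0)" for x
  have small: "\<forall>\<^sub>F m in sequentially. a * d ^ m \<le> e"
  proof -
    have "(\<lambda>m. a * d ^ m) \<longlonglongrightarrow> a * 0"
      using d by (intro tendsto_mult tendsto_const LIMSEQ_power_zero) auto
    then have "\<forall>\<^sub>F m in sequentially. a * d ^ m < e" using e by (intro order_tendstoD) auto
    then show ?thesis by eventually_elim simp
  qed
  have key: "\<exists>N. \<forall>x. x0 < x \<and> x < x0 + a * d ^ N \<longrightarrow> (\<exists>m. R (Q m) \<and> R (Q (m+1)) \<and>
                 ((d * Q (m+1) \<le> q x \<and> q x \<le> Q m / d) \<or> (Q m / d \<le> q x \<and> q x \<le> d * Q (m+1))))"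
    if ev: "\<forall>\<^sub>F m in sequentially. R (Q m)" for R
  proof -
    from eventually_conj[OF ev small] obtain N where N: "\<And>m. m \<ge> N \<Longrightarrow> R (Q m) \<and> a * d ^ m \<le> e"
      unfolding eventually_sequentially by blast
    show ?thesis
    proof (rule exI[of _ N], intro allI impI)
      fix x assume x: "x0 < x \<and> x < x0 + a * d ^ N"
      have "\<exists>m\<ge>N. (d * Q (m+1) \<le> q x \<and> q x \<le> Q m / d) \<or> (Q m / d \<le> q x \<and> q x \<le> d * Q (m+1))"
        unfolding Q_def q_def
        by (rule bracket[OF a d mono conjunct2[OF N[OF order.refl]] conjunct1[OF x] conjunct2[OF x]])
      then obtain m where mN: "m \<ge> N" and disj:
        "(d * Q (m+1) \<le> q x \<and> q x \<le> Q m / d) \<or> (Q m / d \<le> q x \<and> q x \<le> d * Q (m+1))"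
        by blast
      have "m + 1 \<ge> N" using mN by simp
      then have R1: "R (Q (m+1))" using N by blast
      have R0: "R (Q m)" using N mN by blast
      show "\<exists>m. R (Q m) \<and> R (Q (m+1)) \<and>
                 ((d * Q (m+1) \<le> q x \<and> q x \<le> Q m / d) \<or> (Q m / d \<le> q x \<and> q x \<le> d * Q (m+1)))"
        by (rule exI[of _ m], intro conjI R0 R1 disj)
    qed
  qed
  have right: "\<forall>\<^sub>F x in at_right x0. P x" if "\<exists>N. \<forall>x. x0 < x \<and> x < x0 + a * d ^ N \<longrightarrow> P x" for P
  proof -
    from that obtain N where "\<forall>x. x0 < x \<and> x < x0 + a * d ^ N \<longrightarrow> P x" by blast
    moreover have "x0 < x0 + a * d ^ N" using a d by simp
    ultimately show ?thesis unfolding eventually_at_right_field by blast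
  qed
  have lim': "((\<lambda>m. ereal (Q m)) \<longlongrightarrow> L) sequentially" using lim unfolding Q_def .
  have dd: "d * d < 1" using d mult_strict_mono[of d 1 d 1] by simp
  from L consider "L = 0" | "L = \<infinity>" | "L = -\<infinity>" by blast
  then have "((\<lambda>x. ereal (q x)) \<longlongrightarrow> L) (at_right x0)"
  proof cases
    case 1
    then have L0: "L = ereal 0" by (simp add: zero_ereal_def)
    have Q0: "Q \<longlonglongrightarrow> 0" using lim' unfolding L0 by simp
    have "(q \<longlongrightarrow> 0) (at_right x0)"
    proof (rule tendstoI)
      fix \<epsilon> :: real assume "\<epsilon> > 0"
      then have "\<forall>\<^sub>F m in sequentially. dist (Q m) 0 < \<epsilon> * d" using d Q0 by (intro tendstoD) auto
      then have ev: "\<forall>\<^sub>F m in sequentially. \<bar>Q m\<bar> < \<epsilon> * d" by simp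
      have "\<forall>x. x0 < x \<and> x < x0 + a * d ^ N \<longrightarrow> dist (q x) 0 < \<epsilon>" if
        "\<forall>x. x0 < x \<and> x < x0 + a * d ^ N \<longrightarrow> (\<exists>m. \<bar>Q m\<bar> < \<epsilon> * d \<and> \<bar>Q (m+1)\<bar> < \<epsilon> * d \<and>
                 ((d * Q (m+1) \<le> q x \<and> q x \<le> Q m / d) \<or> (Q m / d \<le> q x \<and> q x \<le> d * Q (m+1))))" for N
      proof (intro allI impI)
        fix x assume "x0 < x \<and> x < x0 + a * d ^ N"
        with that obtain m where m: "\<bar>Q m\<bar> < \<epsilon> * d" "\<bar>Q (m+1)\<bar> < \<epsilon> * d"
          "(d * Q (m+1) \<le> q x \<and> q x \<le> Q m / d) \<or> (Q m / d \<le> q x \<and> q x \<le> d * Q (m+1))" by blast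
        have "\<bar>Q m / d\<bar> = \<bar>Q m\<bar> / d" using d by (simp add: abs_divide)
        also have "\<dots> < \<epsilon>" using m(1) d(1) by (simp only: pos_divide_less_eq)
        finally have b1: "\<bar>Q m / d\<bar> < \<epsilon>" .
        have "\<bar>d * Q (m+1)\<bar> = d * \<bar>Q (m+1)\<bar>" using d by (simp add: abs_mult)
        also have "\<dots> < d * (\<epsilon> * d)" using m(2) d(1) by (rule mult_strict_left_mono)
        also have "\<dots> = \<epsilon> * (d * d)" by (simp only: ac_simps)
        also have "\<dots> < \<epsilon> * 1" using dd \<open>\<epsilon> > 0\<close> by (rule mult_strict_left_mono)
        finally have b2: "\<bar>d * Q (m+1)\<bar> < \<epsilon>" by simp
        show "dist (q x) 0 < \<epsilon>" using m(3) b1 b2 unfolding dist_real_def abs_less_iff by (elim disjE) linarith+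
      qed
      moreover have "\<exists>N. \<forall>x. x0 < x \<and> x < x0 + a * d ^ N \<longrightarrow> (\<exists>m. \<bar>Q m\<bar> < \<epsilon> * d \<and> \<bar>Q (m+1)\<bar> < \<epsilon> * d \<and>
                 ((d * Q (m+1) \<le> q x \<and> q x \<le> Q m / d) \<or> (Q m / d \<le> q x \<and> q x \<le> d * Q (m+1))))"
        by (rule key[where R="\<lambda>y. \<bar>y\<bar> < \<epsilon> * d", OF ev])
      ultimately show "\<forall>\<^sub>F x in at_right x0. dist (q x) 0 < \<epsilon>" by (intro right) blast
    qed
    then show ?thesis unfolding L0 by simp
  next
    case 2
    show ?thesis unfolding 2 tendsto_PInfty
    proof
      fix r :: real
      have "\<forall>\<^sub>F m in sequentially. ereal (\<bar>r\<bar> / d) < ereal (Q m)"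
        using lim' unfolding 2 tendsto_PInfty by blast
      then have ev: "\<forall>\<^sub>F m in sequentially. \<bar>r\<bar> / d < Q m" by simp
      have aux: "r < d * y \<and> r < y / d" if "\<bar>r\<bar> / d < y" for y
      proof -
        have "\<bar>r\<bar> < d * y" using that d by (simp add: divide_less_eq mult.commute)
        moreover have "\<bar>r\<bar> \<le> \<bar>r\<bar> / d" using d mult_left_mono[of d 1 "\<bar>r\<bar>"] by (simp add: le_divide_eq)
        moreover have "y \<le> y / d"
        proof -
          have "0 \<le> \<bar>r\<bar> / d" using d by simp
          then have "0 \<le> y" using that by linarith
          then have "y * d \<le> y * 1" using d by (intro mult_left_mono) auto
          then show ?thesis using d by (simp add: le_divide_eq)
        qed
        ultimately show ?thesis using that abs_ge_self[of r] by auto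
      qed
      have "\<forall>x. x0 < x \<and> x < x0 + a * d ^ N \<longrightarrow> ereal r < ereal (q x)" if
        "\<forall>x. x0 < x \<and> x < x0 + a * d ^ N \<longrightarrow> (\<exists>m. \<bar>r\<bar> / d < Q m \<and> \<bar>r\<bar> / d < Q (m+1) \<and>
                 ((d * Q (m+1) \<le> q x \<and> q x \<le> Q m / d) \<or> (Q m / d \<le> q x \<and> q x \<le> d * Q (m+1))))" for N
      proof (intro allI impI)
        fix x assume "x0 < x \<and> x < x0 + a * d ^ N"
        with that obtain m where m: "\<bar>r\<bar> / d < Q m" "\<bar>r\<bar> / d < Q (m+1)"
          "(d * Q (m+1) \<le> q x \<and> q x \<le> Q m / d) \<or> (Q m / d \<le> q x \<and> q x \<le> d * Q (m+1))" by blast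
        have "r < q x" using aux[OF m(1)] aux[OF m(2)] m(3) by (elim disjE conjE) linarith+
        then show "ereal r < ereal (q x)" by simp
      qed
      moreover have "\<exists>N. \<forall>x. x0 < x \<and> x < x0 + a * d ^ N \<longrightarrow> (\<exists>m. \<bar>r\<bar> / d < Q m \<and> \<bar>r\<bar> / d < Q (m+1) \<and>
                 ((d * Q (m+1) \<le> q x \<and> q x \<le> Q m / d) \<or> (Q m / d \<le> q x \<and> q x \<le> d * Q (m+1))))"
        by (rule key[where R="\<lambda>y. \<bar>r\<bar> / d < y", OF ev])
      ultimately show "\<forall>\<^sub>F x in at_right x0. ereal r < ereal (q x)" by (intro right) blast
    qed
  next
    case 3
    show ?thesis unfolding 3 tendsto_MInfty
    proof
      fix r :: real
      have "\<forall>\<^sub>F m in sequentially. ereal (Q m) < ereal (- \<bar>r\<bar> / d)"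
        using lim' unfolding 3 tendsto_MInfty by blast
      then have ev: "\<forall>\<^sub>F m in sequentially. Q m < - \<bar>r\<bar> / d" by simp
      have aux: "d * y < r \<and> y / d < r" if "y < - \<bar>r\<bar> / d" for y
      proof -
        have "d * y < - \<bar>r\<bar>" using mult_strict_left_mono[OF that d(1)] d by simp
        moreover have "\<bar>r\<bar> \<le> \<bar>r\<bar> / d" using d mult_left_mono[of d 1 "\<bar>r\<bar>"] by (simp add: le_divide_eq)
        moreover have "y / d \<le> y"
        proof -
          have "0 \<le> \<bar>r\<bar> / d" using d by simp
          then have "y \<le> 0" using that by linarith
          then have "y * 1 \<le> y * d" using d by (intro mult_left_mono_neg) auto
          then show ?thesis using d by (simp add: divide_le_eq)
        qed
        ultimately show ?thesis using that abs_ge_minus_self[of r] by auto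
      qed
      have "\<forall>x. x0 < x \<and> x < x0 + a * d ^ N \<longrightarrow> ereal (q x) < ereal r" if
        "\<forall>x. x0 < x \<and> x < x0 + a * d ^ N \<longrightarrow> (\<exists>m. Q m < - \<bar>r\<bar> / d \<and> Q (m+1) < - \<bar>r\<bar> / d \<and>
                 ((d * Q (m+1) \<le> q x \<and> q x \<le> Q m / d) \<or> (Q m / d \<le> q x \<and> q x \<le> d * Q (m+1))))" for N
      proof (intro allI impI)
        fix x assume "x0 < x \<and> x < x0 + a * d ^ N"
        with that obtain m where m: "Q m < - \<bar>r\<bar> / d" "Q (m+1) < - \<bar>r\<bar> / d"
          "(d * Q (m+1) \<le> q x \<and> q x \<le> Q m / d) \<or> (Q m / d \<le> q x \<and> q x \<le> d * Q (m+1))" by blast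
        have "q x < r" using aux[OF m(1)] aux[OF m(2)] m(3) by (elim disjE conjE) linarith+
        then show "ereal (q x) < ereal r" by simp
      qed
      moreover have "\<exists>N. \<forall>x. x0 < x \<and> x < x0 + a * d ^ N \<longrightarrow> (\<exists>m. Q m < - \<bar>r\<bar> / d \<and> Q (m+1) < - \<bar>r\<bar> / d \<and>
                 ((d * Q (m+1) \<le> q x \<and> q x \<le> Q m / d) \<or> (Q m / d \<le> q x \<and> q x \<le> d * Q (m+1))))"
        by (rule key[where R="\<lambda>y. y < - \<bar>r\<bar> / d", OF ev])
      ultimately show "\<forall>\<^sub>F x in at_right x0. ereal (q x) < ereal r" by (intro right) blast
    qed
  qed
  then show ?thesis unfolding q_def .
qed

theorem lemma3:
  fixes g :: "real \<Rightarrow> real" and x0 a d :: real and L :: ereal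
  assumes x0: "x0 \<in> {0..1}"
    and d: "0 < d" "d < 1"
    and a: "a \<noteq> 0"
    and xm_in: "\<forall>\<^sub>F m in sequentially. x0 + a * d ^ m \<in> {0..1}"
    and lim: "((\<lambda>m. ereal ((g (x0 + a * d ^ m) - g x0) / ((x0 + a * d ^ m) - x0)))
                 \<longlongrightarrow> L) sequentially"
    and L: "L \<in> {0, \<infinity>, -\<infinity>}"
  shows "(a < 0 \<and> (\<exists>\<epsilon>>0. strict_mono_on ({x0 - \<epsilon>..x0} \<inter> {0..1}) g
                          \<or> strict_antimono_on ({x0 - \<epsilon>..x0} \<inter> {0..1}) g)
           \<longrightarrow> ((\<lambda>x. ereal ((g x - g x0) / (x - x0))) \<longlongrightarrow> L) (at x0 within {0..<x0}))
       \<and> (a > 0 \<and> (\<exists>\<epsilon>>0. strict_mono_on ({x0..x0 + \<epsilon>} \<inter> {0..1}) g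
                          \<or> strict_antimono_on ({x0..x0 + \<epsilon>} \<inter> {0..1}) g)
           \<longrightarrow> ((\<lambda>x. ereal ((g x - g x0) / (x - x0))) \<longlongrightarrow> L) (at x0 within {x0<..1}))"
proof (intro conjI impI)
  obtain m0 where m0: "x0 + a * d ^ m0 \<in> {0..1}" using eventually_happens[OF xm_in] by auto
  have dm0: "0 < d ^ m0" using d by simp
  have lim2: "((\<lambda>m. ereal ((g (x0 + a * d ^ m) - g x0) / (a * d ^ m))) \<longlongrightarrow> L) sequentially"
    using lim by simp
  {
    assume H: "a > 0 \<and> (\<exists>\<epsilon>>0. strict_mono_on ({x0..x0 + \<epsilon>} \<inter> {0..1}) g
                          \<or> strict_antimono_on ({x0..x0 + \<epsilon>} \<inter> {0..1}) g)"
    then have ap: "a > 0" by blast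
    from H obtain \<epsilon> where \<epsilon>: "\<epsilon> > 0" and mo: "strict_mono_on ({x0..x0 + \<epsilon>} \<inter> {0..1}) g
                          \<or> strict_antimono_on ({x0..x0 + \<epsilon>} \<inter> {0..1}) g" by blast
    have "0 < a * d ^ m0" using ap dm0 by simp
    then have x01: "x0 < 1" using m0 by simp
    define e where "e = min \<epsilon> (1 - x0)"
    have e: "e > 0" using \<epsilon> x01 by (simp add: e_def)
    have sub: "{x0..x0+e} \<subseteq> {x0..x0 + \<epsilon>} \<inter> {0..1}" using x0 by (auto simp: e_def)
    have mono: "(\<forall>x\<in>{x0..x0+e}. \<forall>y\<in>{x0..x0+e}. x \<le> y \<longrightarrow> g x \<le> g y)
             \<or> (\<forall>x\<in>{x0..x0+e}. \<forall>y\<in>{x0..x0+e}. x \<le> y \<longrightarrow> g y \<le> g x)"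
    proof (cases "strict_mono_on ({x0..x0 + \<epsilon>} \<inter> {0..1}) g")
      case True
      have "g x \<le> g y" if "x\<in>{x0..x0+e}" "y\<in>{x0..x0+e}" "x \<le> y" for x y
      proof (cases "x = y")
        case False
        then have "x < y" using that by simp
        then show ?thesis using True sub that unfolding strict_mono_on_def
          by (meson less_imp_le subsetD)
      qed simp
      then show ?thesis by blast
    next
      case False
      then have A: "strict_antimono_on ({x0..x0 + \<epsilon>} \<inter> {0..1}) g" using mo by blast
      have "g y \<le> g x" if "x\<in>{x0..x0+e}" "y\<in>{x0..x0+e}" "x \<le> y" for x y
      proof (cases "x = y")
        case False
        then have "x < y" using that by simp
        then show ?thesis using A sub that unfolding monotone_on_def
          by (meson less_imp_le subsetD)
      qed simp
      then show ?thesis by blast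
    qed
    have "((\<lambda>x. ereal ((g x - g x0) / (x - x0))) \<longlongrightarrow> L) (at_right x0)"
      by (rule core_right[OF ap d e mono lim2 L])
    then show "((\<lambda>x. ereal ((g x - g x0) / (x - x0))) \<longlongrightarrow> L) (at x0 within {x0<..1})"
      by (rule tendsto_within_subset) auto
  }
  {
    assume H: "a < 0 \<and> (\<exists>\<epsilon>>0. strict_mono_on ({x0 - \<epsilon>..x0} \<inter> {0..1}) g
                          \<or> strict_antimono_on ({x0 - \<epsilon>..x0} \<inter> {0..1}) g)"
    then have an: "a < 0" by blast
    from H obtain \<epsilon> where \<epsilon>: "\<epsilon> > 0" and mo: "strict_mono_on ({x0 - \<epsilon>..x0} \<inter> {0..1}) g
                          \<or> strict_antimono_on ({x0 - \<epsilon>..x0} \<inter> {0..1}) g" by blast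
    have "a * d ^ m0 < 0" using an dm0 by (simp add: mult_neg_pos)
    then have x01: "0 < x0" using m0 by simp
    define e where "e = min \<epsilon> x0"
    have e: "e > 0" using \<epsilon> x01 by (simp add: e_def)
    have sub: "{x0-e..x0} \<subseteq> {x0 - \<epsilon>..x0} \<inter> {0..1}" using x0 by (auto simp: e_def)
    define h where "h t = - g (- t)" for t
    have ap: "-a > 0" using an by simp
    have mono: "(\<forall>x\<in>{-x0..-x0+e}. \<forall>y\<in>{-x0..-x0+e}. x \<le> y \<longrightarrow> h x \<le> h y)
             \<or> (\<forall>x\<in>{-x0..-x0+e}. \<forall>y\<in>{-x0..-x0+e}. x \<le> y \<longrightarrow> h y \<le> h x)"
    proof (cases "strict_mono_on ({x0 - \<epsilon>..x0} \<inter> {0..1}) g")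
      case True
      have "h x \<le> h y" if "x\<in>{-x0..-x0+e}" "y\<in>{-x0..-x0+e}" "x \<le> y" for x y
      proof (cases "x = y")
        case False
        then have "-y < -x" using that by simp
        moreover have "-x \<in> {x0-e..x0}" "-y \<in> {x0-e..x0}" using that by auto
        ultimately have "g (-y) < g (-x)" using True sub unfolding strict_mono_on_def
          by (meson subsetD)
        then show ?thesis unfolding h_def by simp
      qed simp
      then show ?thesis by blast
    next
      case False
      then have A: "strict_antimono_on ({x0 - \<epsilon>..x0} \<inter> {0..1}) g" using mo by blast
      have "h y \<le> h x" if "x\<in>{-x0..-x0+e}" "y\<in>{-x0..-x0+e}" "x \<le> y" for x y
      proof (cases "x = y")
        case False
        then have "-y < -x" using that by simp
        moreover have "-x \<in> {x0-e..x0}" "-y \<in> {x0-e..x0}" using that by auto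
        ultimately have "g (-x) < g (-y)" using A sub unfolding monotone_on_def
          by (meson subsetD)
        then show ?thesis unfolding h_def by simp
      qed simp
      then show ?thesis by blast
    qed
    have eqQ: "(\<lambda>m. ereal ((h (-x0 + (-a) * d ^ m) - h (-x0)) / ((-a) * d ^ m)))
             = (\<lambda>m. ereal ((g (x0 + a * d ^ m) - g x0) / (a * d ^ m)))"
    proof
      fix m
      have "(h (-x0 + (-a) * d ^ m) - h (-x0)) / ((-a) * d ^ m)
            = (- (g (x0 + a * d ^ m) - g x0)) / (- (a * d ^ m))"
        unfolding h_def by (simp add: algebra_simps)
      also have "\<dots> = (g (x0 + a * d ^ m) - g x0) / (a * d ^ m)" by (rule minus_divide_divide)
      finally show "ereal ((h (-x0 + (-a) * d ^ m) - h (-x0)) / ((-a) * d ^ m))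
             = ereal ((g (x0 + a * d ^ m) - g x0) / (a * d ^ m))" by simp
    qed
    have "((\<lambda>y. ereal ((h y - h (-x0)) / (y - (-x0)))) \<longlongrightarrow> L) (at_right (-x0))"
      by (rule core_right[OF ap d e mono _ L]) (use lim2 eqQ in simp)
    moreover have "(\<lambda>y. ereal ((h y - h (-x0)) / (y - (-x0))))
                 = (\<lambda>y. ereal ((g (- y) - g x0) / (- y - x0)))"
    proof
      fix y
      have "(h y - h (-x0)) / (y - (-x0)) = (- (g (- y) - g x0)) / (- (- y - x0))"
        unfolding h_def by (simp add: algebra_simps)
      also have "\<dots> = (g (- y) - g x0) / (- y - x0)" by (rule minus_divide_divide)
      finally show "ereal ((h y - h (-x0)) / (y - (-x0))) = ereal ((g (- y) - g x0) / (- y - x0))" by simp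
    qed
    ultimately have "((\<lambda>y. ereal ((g (- y) - g x0) / (- y - x0))) \<longlongrightarrow> L) (at_right (-x0))" by simp
    then have "((\<lambda>x. ereal ((g x - g x0) / (x - x0))) \<longlongrightarrow> L) (at_left x0)"
      unfolding at_left_minus[of x0] filterlim_filtermap by simp
    then show "((\<lambda>x. ereal ((g x - g x0) / (x - x0))) \<longlongrightarrow> L) (at x0 within {0..<x0})"
      by (rule tendsto_within_subset) auto
  }
qed

end
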